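(* Fix integers $d,n$ with $d+2\leq n\leq 2d$ and $\tau>0$. Let $W=\{w_k\}_{k\in[n]}$ be a minimizer of $\mathcal{L}^{(\tau)}_{\mathrm{CE}}(W,W)$ subject to $W\in\operatorname{SMC}(d,n)$, and let $S_0\sqcup S_1\sqcup\cdots\sqcup S_l=[n]$ be any partition (with $S_0$ possibly empty and $l\geq n-d$) such that (a) $|S_0|=\dim\operatorname{span}\{w_k\}_{k\in S_0}$, (b) $|S_j|=\dim\operatorname{span}\{w_k\}_{k\in S_j}+1$ for each $j\in[l]$, and (c) $\operatorname{span}\{w_k\}_{k\in S_j}\perp\operatorname{span}\{w_k\}_{k\in S_{j'}}$ whenever $j\neq j'$ (with $j,j'\in\{0,1,\ldots,l\}$). Then $S_0$ is empty, $W$ spans $\mathbb{R}^d$, and $l=n-d$.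
   Context: $[n]=\{1,\ldots,n\}$. For a configuration $X=\{x_i\}_{i\in[n]}$ in the unit sphere $S^{d-1}$, $\delta(X):=\min_{j\in[n]}\operatorname{dist}(x_j,\operatorname{conv}\{x_i\}_{i\neq j})$; $\operatorname{SMC}(d,n)$ is the set of $n$-point configurations in $S^{d-1}$ maximizing $\delta$ (softmax codes). For $\tau>0$, $\mathcal{L}^{(\tau)}_{\mathrm{CE}}(W,W):=\frac{1}{n}\sum_{k=1}^n-\log\Big(\frac{\exp(\langle w_k,w_k\rangle/\tau)}{\sum_{j=1}^n\exp(\langle w_j,w_k\rangle/\tau)}\Big)$. (In this regime every softmax code admits such a partition.) *)

theory Defs
  imports "HOL-Analysis.Analysis"
begin

text \<open>An n-point configuration X = (w 1, ..., w n) in the unit sphere S^(d-1) of R^d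
  (d = CARD('d)); values of w outside {1..n} are irrelevant.\<close>
definition sphere_config :: "nat \<Rightarrow> (nat \<Rightarrow> real^'d) \<Rightarrow> bool" where
  "sphere_config n w \<longleftrightarrow> (\<forall>k\<in>{1..n}. norm (w k) = 1)"

definition delta_cfg :: "nat \<Rightarrow> (nat \<Rightarrow> real^'d) \<Rightarrow> real" where
  "delta_cfg n w = Min ((\<lambda>j. infdist (w j) (convex hull (w ` ({1..n} - {j})))) ` {1..n})"

definition SMC :: "nat \<Rightarrow> (nat \<Rightarrow> real^'d) \<Rightarrow> bool" where
  "SMC n w \<longleftrightarrow> sphere_config n w \<and>
     (\<forall>v :: nat \<Rightarrow> real^'d. sphere_config n v \<longrightarrow> delta_cfg n v \<le> delta_cfg n w)"

definition CE_loss :: "real \<Rightarrow> nat \<Rightarrow> (nat \<Rightarrow> real^'d) \<Rightarrow> real" where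
  "CE_loss \<tau> n w = (1 / real n) * (\<Sum>k\<in>{1..n}.
      - ln (exp (inner (w k) (w k) / \<tau>) / (\<Sum>j\<in>{1..n}. exp (inner (w j) (w k) / \<tau>))))"

end

theory Submission
  imports Defs
begin


lemma exp_strict: "x \<noteq> 0 \<Longrightarrow> 1 + x < exp (x::real)"
  using exp_minus_greater[of "-x"] by simp

lemma amgm:
  fixes th s :: real
  assumes "0 \<le> th" "th \<le> 1"
  shows "exp (th* s) \<le> (1-th) + th*exp s"
proof -
  have e1: "(1-th)*(1 - th* s) \<le> (1-th)*exp (-(th* s))"
    using assms exp_ge_add_one_self[of "-(th* s)"] by (intro mult_left_mono) auto
  have e2: "th*(1 + (1-th)* s) \<le> th*exp ((1-th)* s)"
    using assms exp_ge_add_one_self[of "(1-th)* s"] by (intro mult_left_mono) auto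
  have "1 \<le> (1-th)*exp (-(th* s)) + th*exp ((1-th)* s)"
    using e1 e2 by (simp add: algebra_simps)
  hence "exp (th* s) * 1 \<le> exp (th* s) * ((1-th)*exp (-(th* s)) + th*exp ((1-th)* s))"
    by (intro mult_left_mono) auto
  also have "\<dots> = (1-th) + th*exp s"
    by (simp add: algebra_simps flip: exp_add)
  finally show ?thesis by simp
qed

lemma amgm_strict:
  fixes th s :: real
  assumes "0 < th" "th < 1" "s \<noteq> 0"
  shows "exp (th* s) < (1-th) + th*exp s"
proof -
  have e1: "(1-th)*(1 - th* s) \<le> (1-th)*exp (-(th* s))"
    using assms exp_ge_add_one_self[of "-(th* s)"] by (intro mult_left_mono) auto
  have e2: "th*(1 + (1-th)* s) < th*exp ((1-th)* s)"
    using assms exp_strict[of "(1-th)* s"] by (intro mult_strict_left_mono) auto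
  have "1 < (1-th)*exp (-(th* s)) + th*exp ((1-th)* s)"
    using e1 e2 by (simp add: algebra_simps)
  hence "exp (th* s) * 1 < exp (th* s) * ((1-th)*exp (-(th* s)) + th*exp ((1-th)* s))"
    by (intro mult_strict_left_mono) auto
  also have "\<dots> = (1-th) + th*exp s"
    by (simp add: algebra_simps flip: exp_add)
  finally show ?thesis by simp
qed

lemma delta_ge1:
  fixes w :: "nat \<Rightarrow> real^'d"
  assumes sc: "sphere_config n w" and n2: "n \<ge> 2"
    and ip: "\<forall>i\<in>{1..n}. \<forall>k\<in>{1..n}. i \<noteq> k \<longrightarrow> inner (w i) (w k) \<le> 0"
  shows "delta_cfg n w \<ge> 1"
  unfolding delta_cfg_def
proof (subst Min_ge_iff, simp, use n2 in simp, safe)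
  fix j assume j: "j \<in> {1..n}"
  let ?O = "w ` ({1..n} - {j})"
  have ne: "convex hull ?O \<noteq> {}"
  proof -
    obtain k where "k \<in> {1..n}" "k \<noteq> j" using n2 j
    proof (cases "j = 1")
      case True thus ?thesis using that[of 2] n2 by auto
    next
      case False thus ?thesis using that[of 1] n2 j by auto
    qed
    thus ?thesis by auto
  qed
  have sub: "convex hull ?O \<subseteq> {y. inner (w j) y \<le> 0}"
    by (rule hull_minimal) (use ip j in \<open>auto simp: convex_halfspace_le\<close>)
  have nj: "norm (w j) = 1" using sc j by (simp add: sphere_config_def)
  show "1 \<le> infdist (w j) (convex hull ?O)"
    unfolding infdist_notempty[OF ne]
  proof (rule cINF_greatest[OF ne])
    fix a assume "a \<in> convex hull ?O"
    hence "inner (w j) a \<le> 0" using sub by auto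
    moreover have "inner (w j) (w j - a) \<le> norm (w j) * norm (w j - a)"
      by (rule norm_cauchy_schwarz)
    moreover have "inner (w j) (w j) = 1" using nj by (simp add: dot_square_norm)
    ultimately show "1 \<le> dist (w j) a" using nj by (simp add: dist_norm inner_diff_right)
  qed
qed



lemma sum_split_PN:
  fixes c :: "'b \<Rightarrow> real" and f :: "'b \<Rightarrow> 'c::comm_monoid_add"
  assumes fin: "finite Q" and z: "\<forall>v\<in>Q. c v = 0 \<longrightarrow> f v = 0"
  shows "sum f Q = sum f {v\<in>Q. 0 < c v} + sum f {v\<in>Q. c v < 0}"
proof -
  have "sum f Q = sum f ({v\<in>Q. 0 < c v} \<union> {v\<in>Q. c v < 0})"
    by (rule sum.mono_neutral_left[symmetric]) (use fin z in auto)
  also have "\<dots> = sum f {v\<in>Q. 0 < c v} + sum f {v\<in>Q. c v < 0}"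
    by (rule sum.union_disjoint) (use fin in auto)
  finally show ?thesis .
qed

lemma core_C:
  fixes Q :: "'a::real_inner set" and c :: "'a \<Rightarrow> real"
  assumes fin: "finite Q" and nrm: "\<forall>v\<in>Q. norm v = 1"
    and lin: "(\<Sum>v\<in>Q. c v *\<^sub>R v) = 0" and sg: "sum c Q \<ge> 0"
    and neg: "\<exists>v\<in>Q. c v < 0"
  shows "\<exists>j\<in>Q. c j < 0 \<and> (\<exists>y\<in>convex hull {v\<in>Q. 0 < c v}. dist j y \<le> 1 \<and> (y \<noteq> 0 \<longrightarrow> dist j y < 1))"
proof -
  define P where "P = {v\<in>Q. 0 < c v}"
  define N where "N = {v\<in>Q. c v < 0}"
  have finP: "finite P" and finN: "finite N" using fin by (auto simp: P_def N_def)
  have Nne: "N \<noteq> {}" using neg by (auto simp: N_def)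
  have s1: "sum c Q = sum c P + sum c N"
    unfolding P_def N_def by (rule sum_split_PN[OF fin]) auto
  have s2: "(\<Sum>v\<in>Q. c v *\<^sub>R v) = (\<Sum>v\<in>P. c v *\<^sub>R v) + (\<Sum>v\<in>N. c v *\<^sub>R v)"
    unfolding P_def N_def by (rule sum_split_PN[OF fin]) auto
  define \<beta> where "\<beta> = (\<Sum>v\<in>N. - c v)"
  define \<alpha> where "\<alpha> = sum c P"
  have bpos: "\<beta> > 0" unfolding \<beta>_def
    by (rule sum_pos[OF finN Nne]) (auto simp: N_def)
  have ab: "\<alpha> \<ge> \<beta>" using s1 sg by (simp add: \<alpha>_def \<beta>_def sum_negf)
  hence apos: "\<alpha> > 0" using bpos by linarith
  define y0 where "y0 = (\<Sum>v\<in>P. c v *\<^sub>R v)"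
  have yN: "(\<Sum>v\<in>N. (- c v) *\<^sub>R v) = y0"
    using s2 lin by (simp add: y0_def sum_negf add_eq_0_iff)
  define zB where "zB = (1/\<beta>) *\<^sub>R y0"
  define zA where "zA = (1/\<alpha>) *\<^sub>R y0"
  define t where "t = \<beta>/\<alpha>"
  have t01: "0 < t" "t \<le> 1" using ab bpos apos by (auto simp: t_def)
  have zAB: "zA = t *\<^sub>R zB" using bpos apos by (simp add: zA_def zB_def t_def)
  have zBsum: "zB = (\<Sum>v\<in>N. (- c v / \<beta>) *\<^sub>R v)"
    by (simp add: zB_def yN[symmetric] scaleR_sum_right)
  have "inner zB zB = (\<Sum>v\<in>N. (- c v / \<beta>) * inner v zB)"
    by (subst (1) zBsum) (simp add: inner_sum_left)
  have "\<exists>j\<in>N. inner j zB \<ge> inner zB zB"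
  proof (rule ccontr)
    assume "\<not> ?thesis"
    hence lt: "\<forall>j\<in>N. inner j zB < inner zB zB" by auto
    have "(\<Sum>v\<in>N. (- c v / \<beta>) * inner v zB) < (\<Sum>v\<in>N. (- c v / \<beta>) * inner zB zB)"
    proof (rule sum_strict_mono[OF finN Nne])
      fix v assume v: "v \<in> N"
      have "0 < - c v / \<beta>" using v bpos by (auto simp: N_def divide_neg_pos)
      thus "(- c v / \<beta>) * inner v zB < (- c v / \<beta>) * inner zB zB"
        using lt v by (intro mult_strict_left_mono) auto
    qed
    also have "\<dots> = inner zB zB"
    proof -
      have "(\<Sum>v\<in>N. (- c v / \<beta>) * inner zB zB) = ((\<Sum>v\<in>N. - c v) / \<beta>) * inner zB zB"
        by (simp only: sum_distrib_right sum_divide_distrib)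
      thus ?thesis using bpos by (simp add: \<beta>_def)
    qed
    finally show False using \<open>inner zB zB = _\<close> by simp
  qed
  then obtain j where jN: "j \<in> N" and jz: "inner j zB \<ge> inner zB zB" by blast
  have nj: "norm j = 1" using jN nrm by (auto simp: N_def)
  have zAhull: "zA \<in> convex hull P"
    unfolding convex_hull_finite[OF finP]
  proof (intro CollectI exI[of _ "\<lambda>v. c v / \<alpha>"] conjI)
    show "\<forall>x\<in>P. 0 \<le> c x / \<alpha>" using apos by (auto simp: P_def)
    show "sum (\<lambda>v. c v / \<alpha>) P = 1" using apos by (simp add: \<alpha>_def sum_divide_distrib[symmetric])
    show "(\<Sum>x\<in>P. (c x / \<alpha>) *\<^sub>R x) = zA"
      by (simp add: zA_def y0_def scaleR_sum_right)
  qed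
  have d2: "(dist j zA)^2 = 1 - 2*t*inner j zB + t^2 * inner zB zB"
  proof -
    have jj: "inner j j = 1" using nj by (simp add: dot_square_norm)
    have "(dist j zA)^2 = inner (j - t *\<^sub>R zB) (j - t *\<^sub>R zB)"
      by (simp add: dist_norm zAB dot_square_norm)
    also have "\<dots> = inner j j - 2*t*inner j zB + t^2 * inner zB zB"
      by (simp add: inner_diff_left inner_diff_right inner_commute algebra_simps power2_eq_square)
    finally show ?thesis using jj by simp
  qed
  have zz: "inner zB zB \<ge> 0" by simp
  have d3: "(dist j zA)^2 \<le> 1 - t*(2-t)*inner zB zB"
  proof -
    have "2*t*inner zB zB \<le> 2*t*inner j zB" using jz t01 by simp
    thus ?thesis using d2 by (simp add: algebra_simps power2_eq_square)
  qed
  have tt: "t*(2-t) > 0" using t01 by simp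
  have "dist j zA \<le> 1"
  proof -
    have "(dist j zA)^2 \<le> 1" using d3 tt zz by (smt (verit) mult_nonneg_nonneg)
    thus ?thesis by (simp add: power_le_one_iff abs_le_iff power2_le_iff_abs_le)
  qed
  moreover have "zA \<noteq> 0 \<longrightarrow> dist j zA < 1"
  proof
    assume "zA \<noteq> 0"
    hence "zB \<noteq> 0" using zAB by auto
    hence "inner zB zB > 0" by simp
    hence "(dist j zA)^2 < 1" using d3 tt by (smt (verit) mult_pos_pos)
    thus "dist j zA < 1" using power_less_imp_less_base[of "dist j zA" 2 1] by simp
  qed
  ultimately show ?thesis using jN zAhull by (auto simp: N_def P_def)
qed



lemma delta_le_of_point:
  fixes u :: "nat \<Rightarrow> real^'d"
  assumes "i \<in> {1..n}" "infdist (u i) (convex hull (u ` ({1..n} - {i}))) \<le> r"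
  shows "delta_cfg n u \<le> r"
  unfolding delta_cfg_def
  by (rule order.trans[OF Min_le assms(2)]) (use assms(1) in auto)

lemma delta_le1:
  fixes u :: "nat \<Rightarrow> real^'d"
  assumes sc: "sphere_config n u" and dn: "CARD('d) + 2 \<le> n"
  shows "delta_cfg n u \<le> 1"
proof (cases "inj_on u {1..n}")
  case False
  then obtain i k where ik: "i \<in> {1..n}" "k \<in> {1..n}" "i \<noteq> k" "u i = u k"
    unfolding inj_on_def by blast
  have "u i \<in> convex hull (u ` ({1..n} - {i}))"
    using ik by (intro hull_inc) auto
  hence "infdist (u i) (convex hull (u ` ({1..n} - {i}))) \<le> 1" by simp
  thus ?thesis by (rule delta_le_of_point[OF ik(1)])
next
  case True
  define Q where "Q = u ` {1..n}"
  have finQ: "finite Q" by (simp add: Q_def)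
  have cQ: "card Q = n" using True by (simp add: Q_def card_image)
  have "affine_dependent Q"
    by (rule affine_dependent_biggerset[OF finQ]) (use cQ dn in simp)
  then obtain U where U: "sum U Q = 0" "\<exists>v\<in>Q. U v \<noteq> 0" "(\<Sum>v\<in>Q. U v *\<^sub>R v) = 0"
    using affine_dependent_explicit_finite[OF finQ] by blast
  have neg: "\<exists>v\<in>Q. U v < 0"
  proof (rule ccontr)
    assume "\<not> ?thesis"
    hence "\<forall>v\<in>Q. 0 \<le> U v" by auto
    hence "\<forall>v\<in>Q. U v = 0" using U(1) sum_nonneg_eq_0_iff[OF finQ] by blast
    thus False using U(2) by auto
  qed
  have nrm: "\<forall>v\<in>Q. norm v = 1" using sc by (auto simp: Q_def sphere_config_def)
  obtain j y where j: "j \<in> Q" "U j < 0" and y: "y \<in> convex hull {v\<in>Q. 0 < U v}" "dist j y \<le> 1"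
    using core_C[OF finQ nrm U(3)] U(1) neg by auto
  obtain i where i: "i \<in> {1..n}" "j = u i" using j by (auto simp: Q_def)
  have "{v\<in>Q. 0 < U v} \<subseteq> u ` ({1..n} - {i})"
    using i j by (auto simp: Q_def)
  hence "y \<in> convex hull (u ` ({1..n} - {i}))" using y(1) hull_mono by blast
  hence "infdist (u i) (convex hull (u ` ({1..n} - {i}))) \<le> 1"
    using y(2) i by (intro infdist_le2) auto
  thus ?thesis by (rule delta_le_of_point[OF i(1)])
qed



lemma dist_ge1:
  fixes w :: "nat \<Rightarrow> real^'d"
  assumes d1: "delta_cfg n w \<ge> 1" and i: "i \<in> {1..n}"
    and y: "y \<in> convex hull (w ` ({1..n} - {i}))"
  shows "dist (w i) y \<ge> 1"
proof -
  have "delta_cfg n w \<le> infdist (w i) (convex hull (w ` ({1..n} - {i})))"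
    unfolding delta_cfg_def by (rule Min_le) (use i in auto)
  also have "\<dots> \<le> dist (w i) y" by (rule infdist_le[OF y])
  finally show ?thesis using d1 by simp
qed

lemma inj_of_delta:
  fixes w :: "nat \<Rightarrow> real^'d"
  assumes d1: "delta_cfg n w \<ge> 1"
  shows "inj_on w {1..n}"
proof (rule inj_onI, rule ccontr)
  fix i k assume ik: "i \<in> {1..n}" "k \<in> {1..n}" "w i = w k" "i \<noteq> k"
  have "w k \<in> convex hull (w ` ({1..n} - {i}))" using ik by (intro hull_inc) auto
  from dist_ge1[OF d1 ik(1) this] show False using ik by simp
qed

lemma zero_in_hull:
  fixes w :: "nat \<Rightarrow> real^'d"
  assumes d1: "delta_cfg n w \<ge> 1" and sc: "sphere_config n w"
    and S: "S \<subseteq> {1..n}" and cS: "card S > dim (w ` S)"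
  shows "0 \<in> convex hull (w ` S)"
proof -
  define Q where "Q = w ` S"
  have finS: "finite S" using S finite_subset by blast
  have finQ: "finite Q" using finS by (simp add: Q_def)
  have injS: "inj_on w S" using inj_of_delta[OF d1] S inj_on_subset by blast
  have cQ: "card Q = card S" using injS by (simp add: Q_def card_image)
  have "dependent Q"
  proof (rule ccontr)
    assume "independent Q"
    from independent_card_le_dim[OF subset_refl this] cQ cS show False by (simp add: Q_def)
  qed
  then obtain u where u: "\<exists>v\<in>Q. u v \<noteq> 0" "(\<Sum>v\<in>Q. u v *\<^sub>R v) = 0"
    using dependent_finite[OF finQ] by blast
  define c where "c = (if sum u Q \<ge> 0 then u else (\<lambda>v. - u v))"
  have c1: "\<exists>v\<in>Q. c v \<noteq> 0" using u(1) by (auto simp: c_def)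
  have c2: "(\<Sum>v\<in>Q. c v *\<^sub>R v) = 0" using u(2) by (auto simp: c_def sum_negf)
  have c3: "sum c Q \<ge> 0" by (auto simp: c_def sum_negf)
  have nrm: "\<forall>v\<in>Q. norm v = 1" using sc S by (auto simp: Q_def sphere_config_def)
  show ?thesis
  proof (cases "\<exists>v\<in>Q. c v < 0")
    case True
    obtain j y where j: "j \<in> Q" "c j < 0" and y: "y \<in> convex hull {v\<in>Q. 0 < c v}"
        "y \<noteq> 0 \<longrightarrow> dist j y < 1"
      using core_C[OF finQ nrm c2 c3 True] by auto
    obtain i where i: "i \<in> S" "j = w i" using j by (auto simp: Q_def)
    have "{v\<in>Q. 0 < c v} \<subseteq> w ` ({1..n} - {i})" using i j S by (auto simp: Q_def)
    hence "y \<in> convex hull (w ` ({1..n} - {i}))" using y(1) hull_mono by blast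
    from dist_ge1[OF d1 _ this] i S have "dist j y \<ge> 1" by auto
    hence "y = 0" using y(2) by auto
    moreover have "convex hull {v\<in>Q. 0 < c v} \<subseteq> convex hull Q" by (rule hull_mono) auto
    ultimately show ?thesis using y(1) by (auto simp: Q_def)
  next
    case False
    hence nn: "\<forall>v\<in>Q. 0 \<le> c v" by auto
    have sp: "sum c Q > 0"
    proof -
      have "sum c Q \<noteq> 0" using sum_nonneg_eq_0_iff[OF finQ] nn c1 by blast
      thus ?thesis using c3 by simp
    qed
    show ?thesis unfolding Q_def[symmetric] convex_hull_finite[OF finQ]
    proof (intro CollectI exI[of _ "\<lambda>v. c v / sum c Q"] conjI)
      show "\<forall>x\<in>Q. 0 \<le> c x / sum c Q" using nn sp by auto
      show "(\<Sum>v\<in>Q. c v / sum c Q) = 1" using sp by (simp add: sum_divide_distrib[symmetric])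
      show "(\<Sum>x\<in>Q. (c x / sum c Q) *\<^sub>R x) = 0"
        using c2 by (simp add: scaleR_sum_right[symmetric] divide_inverse_commute flip: scaleR_scaleR)
    qed
  qed
qed

lemma inner_nonpos_of_zero_hull:
  fixes w :: "nat \<Rightarrow> real^'d"
  assumes d1: "delta_cfg n w \<ge> 1" and sc: "sphere_config n w"
    and i: "i \<in> {1..n}" and k: "k \<in> {1..n}" "k \<noteq> i"
    and z: "0 \<in> convex hull (w ` ({1..n} - {i}))"
  shows "inner (w i) (w k) \<le> 0"
proof (rule ccontr)
  assume "\<not> ?thesis"
  hence cpos: "inner (w i) (w k) > 0" by simp
  define c where "c = inner (w i) (w k)"
  have ni: "norm (w i) = 1" and nk: "norm (w k) = 1" using sc i k by (auto simp: sphere_config_def)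
  have c1: "c \<le> 1" using norm_cauchy_schwarz[of "w i" "w k"] ni nk by (simp add: c_def)
  have wk: "w k \<in> convex hull (w ` ({1..n} - {i}))" using k by (intro hull_inc) auto
  have "(1 - c) *\<^sub>R 0 + c *\<^sub>R w k \<in> convex hull (w ` ({1..n} - {i}))"
    using convexD[OF convex_convex_hull z wk, of "1-c" c] cpos c1 by (simp add: c_def)
  hence yin: "c *\<^sub>R w k \<in> convex hull (w ` ({1..n} - {i}))" by simp
  have "(dist (w i) (c *\<^sub>R w k))^2 = inner (w i - c *\<^sub>R w k) (w i - c *\<^sub>R w k)"
    by (simp add: dist_norm dot_square_norm)
  also have "\<dots> = inner (w i) (w i) - 2*c*inner (w i) (w k) + c^2 * inner (w k) (w k)"
    by (simp add: inner_diff_left inner_diff_right inner_commute algebra_simps power2_eq_square)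
  also have "\<dots> = 1 - c^2" using ni nk by (simp add: dot_square_norm c_def power2_eq_square)
  finally have "(dist (w i) (c *\<^sub>R w k))^2 < 1" using cpos c_def by simp
  hence "dist (w i) (c *\<^sub>R w k) < 1" using power_less_imp_less_base[of _ 2 1] by simp
  with dist_ge1[OF d1 i yin] show False by simp
qed



lemma orth_spans:
  fixes A B :: "'a::euclidean_space set"
  assumes o: "\<forall>x\<in>A. \<forall>y\<in>B. orthogonal x y" and x: "x \<in> span A" and y: "y \<in> span B"
  shows "orthogonal x y"
proof -
  have "\<forall>a\<in>A. orthogonal a y" using o y orthogonal_to_span by blast
  hence "\<forall>a\<in>A. orthogonal y a" by (simp add: orthogonal_commute)
  hence "orthogonal y x" using x orthogonal_to_span by blast
  thus ?thesis by (simp add: orthogonal_commute)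
qed

lemma dim_orth_union:
  fixes A B :: "'a::euclidean_space set"
  assumes o: "\<forall>x\<in>A. \<forall>y\<in>B. orthogonal x y"
  shows "dim (A \<union> B) = dim A + dim B"
proof -
  have int: "span A \<inter> span B = {0}"
  proof (safe)
    fix x assume "x \<in> span A" "x \<in> span B"
    hence "orthogonal x x" using orth_spans[OF o] by blast
    thus "x = 0" by (simp add: orthogonal_def)
  qed (auto simp: span_zero)
  have "dim (A \<union> B) = dim (span (A \<union> B))" by simp
  also have "\<dots> = dim {x + y |x y. x \<in> span A \<and> y \<in> span B}" by (simp only: span_Un)
  also have "\<dots> = dim (span A) + dim (span B)"
    using dim_sums_Int[OF subspace_span subspace_span, of A B] int by simp
  finally show ?thesis by simp
qed

lemma dim_family:
  fixes w :: "nat \<Rightarrow> 'a::euclidean_space"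
  assumes "finite J"
    and "\<forall>j\<in>J. \<forall>j'\<in>J. j \<noteq> j' \<longrightarrow> (\<forall>x\<in>span (w ` S j). \<forall>y\<in>span (w ` S j'). orthogonal x y)"
  shows "dim (w ` (\<Union>j\<in>J. S j)) = (\<Sum>j\<in>J. dim (w ` S j))"
  using assms
proof (induction J rule: finite_induct)
  case empty
  then show ?case by simp
next
  case (insert j J)
  have o: "\<forall>x\<in>w ` S j. \<forall>y\<in>w ` (\<Union>j\<in>J. S j). orthogonal x y"
  proof (intro ballI)
    fix x y assume x: "x \<in> w ` S j" and y: "y \<in> w ` (\<Union>j\<in>J. S j)"
    then obtain j' where j': "j' \<in> J" "y \<in> w ` S j'" by auto
    have "j \<noteq> j'" using j' insert.hyps by auto
    thus "orthogonal x y" using insert.prems j' x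
      by (meson insertCI span_base)
  qed
  have "w ` (\<Union>j\<in>insert j J. S j) = w ` S j \<union> w ` (\<Union>j\<in>J. S j)" by auto
  hence "dim (w ` (\<Union>j\<in>insert j J. S j)) = dim (w ` S j) + dim (w ` (\<Union>j\<in>J. S j))"
    using dim_orth_union[OF o] by simp
  also have "\<dots> = dim (w ` S j) + (\<Sum>j\<in>J. dim (w ` S j))"
    using insert.IH insert.prems by auto
  finally show ?case using insert.hyps by simp
qed



lemma reg_simplex_num0:
  fixes k :: real assumes k: "k > 0"
  shows "(1 - (1/(k + 1))^2) * (-1/k) + (1/(k + 1))^2 = -1/(k + 1)"
proof -
  define t where "t = 1/(k+1)"
  have ht: "t*(k+1) = 1" using k by (simp add: t_def)
  have "k * ((1 - t^2)*(-1/k) + t^2) = -(1 - t^2) + t^2 * k"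
    using k by (simp add: algebra_simps)
  also have "\<dots> = -1 + t * (t*(k+1))" by (simp add: algebra_simps power2_eq_square)
  also have "\<dots> = k * (-t)" using ht by (simp add: algebra_simps)
  finally have eq: "k * ((1 - t^2)*(-1/k) + t^2) = k * (-t)" .
  have "(1 - t^2)*(-1/k) + t^2 = -t" using eq k by (subst (asm) mult_cancel_left) auto
  thus ?thesis by (simp add: t_def)
qed

lemma reg_simplex_num:
  fixes K :: nat assumes "K \<ge> 1"
  shows "(1 - (1/(real K + 1))^2) * (-1/real K) + (1/(real K + 1))^2 = -1/(real K + 1)"
  by (rule reg_simplex_num0) (use assms in simp)

lemma reg_simplex_aux:
  fixes U :: "'a::euclidean_space set"
  shows "subspace U \<Longrightarrow> 1 \<le> K \<Longrightarrow> K \<le> dim U \<Longrightarrow> \<exists>p. (\<forall>i\<le>K. p i \<in> U \<and> norm (p i) = 1) \<and>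
             (\<forall>i\<le>K. \<forall>j\<le>K. i \<noteq> j \<longrightarrow> inner (p i) (p j) = -1 / real K)"
proof (induction K arbitrary: U)
  case 0
  then show ?case by simp
next
  case (Suc K)
  have "\<not> U \<subseteq> {0}"
  proof
    assume "U \<subseteq> {0}"
    hence "dim U \<le> dim {0::'a}" by (rule dim_subset)
    moreover have "dim {0::'a} = 0" by simp
    ultimately show False using Suc by linarith
  qed
  then obtain x where x: "x \<in> U" "x \<noteq> 0" by auto
  define u where "u = (1 / norm x) *\<^sub>R x"
  have uU: "u \<in> U" using x Suc.prems by (simp add: u_def subspace_scale)
  have nu: "norm u = 1" using x by (simp add: u_def)
  have u0: "u \<noteq> 0" using nu by auto
  have uu: "inner u u = 1" using nu by (simp add: dot_square_norm)
  show ?case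
  proof (cases "K = 0")
    case True
    have mu: "-u \<in> U" using uU Suc.prems(1) by (simp add: subspace_neg)
    show ?thesis using True uU mu nu uu
      by (intro exI[of _ "\<lambda>i. if i = 0 then -u else u"]) auto
  next
    case False
    define U' where "U' = {y \<in> U. \<forall>z\<in>span {u}. orthogonal z y}"
    have sU': "subspace U'"
    proof -
      have "U' = U \<inter> {y. \<forall>z\<in>span {u}. orthogonal z y}" by (auto simp: U'_def)
      thus ?thesis using subspace_inter[OF Suc.prems(1) subspace_orthogonal_to_vectors] by simp
    qed
    have "dim U' + dim (span {u}) = dim U"
      unfolding U'_def
      by (rule dim_subspace_orthogonal_to_vectors[OF subspace_span Suc.prems(1)])
         (use uU Suc.prems(1) in \<open>simp add: span_minimal\<close>)
    hence dU': "K \<le> dim U'" using Suc.prems(3) u0 by simp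
    obtain p where p: "\<forall>i\<le>K. p i \<in> U' \<and> norm (p i) = 1"
       "\<forall>i\<le>K. \<forall>j\<le>K. i \<noteq> j \<longrightarrow> inner (p i) (p j) = -1 / real K"
      using Suc.IH[OF sU' _ dU'] False by auto
    have pu: "inner (p i) u = 0" if "i \<le> K" for i
    proof -
      have "orthogonal u (p i)" using p(1) that by (auto simp: U'_def span_base)
      thus ?thesis by (simp add: orthogonal_def inner_commute)
    qed
    define t where "t = 1 / (real K + 1)"
    define a where "a = sqrt (1 - t^2)"
    have t01: "0 < t" "t \<le> 1" by (auto simp: t_def)
    have a2: "a^2 = 1 - t^2" unfolding a_def
      using t01 by (intro real_sqrt_pow2) (simp add: power_le_one)
    define q where "q = (\<lambda>i. if i \<le> K then a *\<^sub>R p i - t *\<^sub>R u else u)"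
    have pi1: "inner (p i) (p i) = 1" if "i \<le> K" for i
      using p(1) that by (simp add: dot_square_norm)
    have qU: "q i \<in> U" if "i \<le> Suc K" for i
      using p(1) uU Suc.prems(1) that by (auto simp: q_def U'_def intro!: subspace_diff subspace_scale)
    have qn: "norm (q i) = 1" if "i \<le> Suc K" for i
    proof (cases "i \<le> K")
      case True
      have "inner (q i) (q i) = a^2 * inner (p i) (p i) - 2 * a * t * inner (p i) u + t^2 * inner u u"
        using True by (simp add: q_def inner_diff_left inner_diff_right inner_commute algebra_simps power2_eq_square)
      also have "\<dots> = 1" using a2 pi1[OF True] pu[OF True] uu by simp
      finally show ?thesis by (simp add: norm_eq_sqrt_inner)
    qed (use nu in \<open>simp add: q_def\<close>)
    have qi: "inner (q i) (q j) = -1 / real (Suc K)" if "i \<le> Suc K" "j \<le> Suc K" "i \<noteq> j" for i j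
    proof -
      have ij: "i \<le> K \<or> i = Suc K" "j \<le> K \<or> j = Suc K" "i \<noteq> j" using that by auto
      consider "i \<le> K" "j \<le> K" | "i \<le> K" "j = Suc K" | "i = Suc K" "j \<le> K"
        using ij by blast
      thus ?thesis
      proof cases
        case 1
        have K1: "K \<ge> 1" using False by linarith
        have "inner (q i) (q j) = a^2 * inner (p i) (p j) - a * t * inner (p i) u - a * t * inner (p j) u + t^2 * inner u u"
          using 1 by (simp add: q_def inner_diff_left inner_diff_right inner_commute algebra_simps power2_eq_square)
        also have "\<dots> = (1 - t^2) * (-1 / real K) + t^2"
          using a2 p(2) 1 ij(3) pu 1 uu by simp
        also have "\<dots> = -1 / (real K + 1)" unfolding t_def by (rule reg_simplex_num[OF K1])
        finally show ?thesis by simp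
      next
        case 2
        have "inner (q i) (q j) = a * inner (p i) u - t * inner u u"
          using 2 by (simp add: q_def inner_diff_left)
        also have "\<dots> = - t" using pu 2 uu by simp
        finally show ?thesis by (simp add: t_def)
      next
        case 3
        have "inner (q i) (q j) = a * inner (p j) u - t * inner u u"
          using 3 by (simp add: q_def inner_diff_right inner_commute)
        also have "\<dots> = - t" using pu 3 uu by simp
        finally show ?thesis by (simp add: t_def)
      qed
    qed
    show ?thesis using qU qn qi by (intro exI[of _ q]) auto
  qed
qed



lemma exp_tangent: "exp y0 * (1 + y - y0) \<le> exp (y::real)"
proof -
  have "exp y0 * (1 + (y - y0)) \<le> exp y0 * exp (y - y0)"
    by (intro mult_left_mono) auto
  also have "exp y0 * exp (y - y0) = exp y" by (simp add: exp_diff)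
  finally show ?thesis by (simp add: algebra_simps)
qed

lemma phi_tangent:
  fixes R K q s :: real
  assumes R: "R > 0" and K: "K \<ge> 0" and q: "q > 0"
  shows "ln (R + K * q * exp s) \<ge> ln (R + K * q) + (K*q/(R+K*q)) * s"
proof -
  define th where "th = K*q/(R+K*q)"
  have pos: "R + K*q > 0" using R K q by (smt (verit) mult_nonneg_nonneg)
  have th01: "0 \<le> th" "th \<le> 1" using pos K q R by (auto simp: th_def divide_simps)
  have eq: "R + K * q * exp s = (R + K*q) * ((1 - th) + th * exp s)"
  proof -
    have h: "(R + K*q) * th = K*q" using pos by (simp add: th_def)
    have "(R + K*q) * ((1 - th) + th * exp s) = (R + K*q) - (R + K*q)*th + ((R + K*q)*th) * exp s"
      by (simp add: algebra_simps)
    also have "\<dots> = R + K * q * exp s" unfolding h by simp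
    finally show ?thesis by simp
  qed
  have "(R + K*q) * exp (th * s) \<le> (R + K*q) * ((1 - th) + th * exp s)"
    using amgm[OF th01] pos by (intro mult_left_mono) auto
  moreover have "0 < (R + K*q) * exp (th * s)" using pos by simp
  moreover have "0 < R + K * q * exp s" using R K q by (simp add: add_pos_nonneg)
  ultimately have "ln ((R + K*q) * exp (th * s)) \<le> ln (R + K * q * exp s)"
    using eq by (subst ln_le_cancel_iff) auto
  thus ?thesis using pos by (simp add: ln_mult th_def)
qed

lemma group_bound:
  fixes x :: "nat \<Rightarrow> 'a::real_inner" and G :: "nat set"
  assumes fin: "finite G" and a1: "card G \<ge> 1" and R: "R > 0" and tau: "\<tau> > 0"
    and nrm: "\<forall>k\<in>G. norm (x k) = 1"
  shows "(\<Sum>k\<in>G. ln (R + (\<Sum>i\<in>G-{k}. exp (inner (x i) (x k) / \<tau>))))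
         \<ge> real (card G) * ln (R + (real (card G) - 1) * exp (-1/((real (card G) - 1)*\<tau>)))"
proof (cases "card G = 1")
  case True
  then obtain k where "G = {k}" using card_1_singletonE by blast
  thus ?thesis by simp
next
  case False
  hence a2: "card G \<ge> 2" using a1 by linarith
  define K where "K = real (card G) - 1"
  have Kpos: "K > 0" using a2 by (simp add: K_def)
  have cardk: "real (card (G - {k})) = K" if "k \<in> G" for k
  proof -
    have "card (G - {k}) = card G - 1" using that fin by (simp add: card_Diff_singleton)
    thus ?thesis using a1 by (simp add: K_def of_nat_diff)
  qed
  define c where "c = (\<lambda>i k. inner (x i) (x k))"
  define r where "r = (\<lambda>k. (\<Sum>i\<in>G-{k}. c i k) / K)"
  have step1: "(\<Sum>i\<in>G-{k}. exp (c i k / \<tau>)) \<ge> K * exp (r k / \<tau>)" if k: "k \<in> G" for k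
  proof -
    have A: "(\<Sum>i\<in>G-{k}. exp (r k / \<tau>) * (1 + c i k / \<tau> - r k / \<tau>)) \<le> (\<Sum>i\<in>G-{k}. exp (c i k / \<tau>))"
      by (intro sum_mono exp_tangent)
    have B: "(\<Sum>i\<in>G-{k}. exp (r k / \<tau>) * (1 + c i k / \<tau> - r k / \<tau>))
        = exp (r k / \<tau>) * (K + (\<Sum>i\<in>G-{k}. c i k) / \<tau> - K * (r k / \<tau>))"
      using cardk[OF k] by (simp add: sum_distrib_left[symmetric] sum.distrib sum_subtractf sum_divide_distrib[symmetric])
    have C: "K + (\<Sum>i\<in>G-{k}. c i k) / \<tau> - K * (r k / \<tau>) = K"
    proof -
      have kr: "K * r k = (\<Sum>i\<in>G-{k}. c i k)" using Kpos by (simp add: r_def)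
      have "K * (r k / \<tau>) = (K * r k) / \<tau>" by simp
      thus ?thesis using kr by simp
    qed
    have "K * exp (r k / \<tau>) = exp (r k / \<tau>) * (K + (\<Sum>i\<in>G-{k}. c i k) / \<tau> - K * (r k / \<tau>))"
      by (simp only: C mult.commute)
    also have "\<dots> \<le> (\<Sum>i\<in>G-{k}. exp (c i k / \<tau>))" using A B by simp
    finally show ?thesis .
  qed
  define q where "q = exp (-1/(K*\<tau>))"
  define th where "th = K*q/(R+K*q)"
  have qpos: "q > 0" by (simp add: q_def)
  have thnn: "th \<ge> 0" using Kpos qpos R by (simp add: th_def)
  have step2: "ln (R + (\<Sum>i\<in>G-{k}. exp (c i k / \<tau>))) \<ge> ln (R + K*q) + th * ((r k + 1/K) / \<tau>)"
    if k: "k \<in> G" for k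
  proof -
    have "exp (r k / \<tau>) = q * exp ((r k + 1/K) / \<tau>)"
      using Kpos tau by (simp add: q_def flip: exp_add) (simp add: field_simps)
    hence "ln (R + K * exp (r k / \<tau>)) \<ge> ln (R + K*q) + th * ((r k + 1/K) / \<tau>)"
      using phi_tangent[OF R _ qpos, of K "(r k + 1/K) / \<tau>"] Kpos by (simp add: th_def mult.assoc)
    also have "ln (R + K * exp (r k / \<tau>)) \<le> ln (R + (\<Sum>i\<in>G-{k}. exp (c i k / \<tau>)))"
    proof -
      have "0 \<le> (\<Sum>i\<in>G-{k}. exp (c i k / \<tau>))" by (intro sum_nonneg) auto
      hence p1: "0 < R + (\<Sum>i\<in>G-{k}. exp (c i k / \<tau>))" using R by linarith
      have p2: "0 < R + K * exp (r k / \<tau>)" using R Kpos by (simp add: add_pos_nonneg)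
      have "R + K * exp (r k / \<tau>) \<le> R + (\<Sum>i\<in>G-{k}. exp (c i k / \<tau>))" using step1[OF k] by linarith
      thus ?thesis using p1 p2 by simp
    qed
    finally show ?thesis .
  qed
  have sumr: "(\<Sum>k\<in>G. r k) \<ge> - real (card G) / K"
  proof -
    have "0 \<le> inner (\<Sum>i\<in>G. x i) (\<Sum>k\<in>G. x k)" by simp
    also have "\<dots> = (\<Sum>k\<in>G. \<Sum>i\<in>G. c i k)"
      unfolding c_def inner_sum_left inner_sum_right by (rule refl)
    also have "\<dots> = (\<Sum>k\<in>G. 1 + (\<Sum>i\<in>G-{k}. c i k))"
    proof (rule sum.cong[OF refl])
      fix k assume k: "k \<in> G"
      have "(\<Sum>i\<in>G. c i k) = c k k + (\<Sum>i\<in>G-{k}. c i k)" using fin k by (simp add: sum.remove)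
      moreover have "c k k = 1" using nrm k by (simp add: c_def dot_square_norm)
      ultimately show "(\<Sum>i\<in>G. c i k) = 1 + (\<Sum>i\<in>G-{k}. c i k)" by simp
    qed
    also have "\<dots> = real (card G) + K * (\<Sum>k\<in>G. r k)"
      using Kpos by (simp add: sum.distrib r_def sum_divide_distrib[symmetric])
    finally have "0 \<le> real (card G) + K * (\<Sum>k\<in>G. r k)" .
    thus ?thesis using Kpos by (simp add: field_simps)
  qed
  have "(\<Sum>k\<in>G. ln (R + K*q) + th * ((r k + 1/K) / \<tau>)) \<le> (\<Sum>k\<in>G. ln (R + (\<Sum>i\<in>G-{k}. exp (c i k / \<tau>))))"
    by (intro sum_mono step2)
  moreover have "(\<Sum>k\<in>G. ln (R + K*q) + th * ((r k + 1/K) / \<tau>)) = real (card G) * ln (R + K*q) + (th/\<tau>) * ((\<Sum>k\<in>G. r k) + real (card G)/K)"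
    using Kpos tau by (simp add: sum.distrib sum_distrib_left[symmetric] sum_divide_distrib[symmetric] algebra_simps) (simp add: field_simps)
  moreover have "(th/\<tau>) * ((\<Sum>k\<in>G. r k) + real (card G)/K) \<ge> 0"
    using sumr thnn tau by (intro mult_nonneg_nonneg) auto
  ultimately have "real (card G) * ln (R + K*q) \<le> (\<Sum>k\<in>G. ln (R + (\<Sum>i\<in>G-{k}. exp (c i k / \<tau>))))"
    by linarith
  thus ?thesis by (simp add: K_def q_def c_def)
qed

lemma merge_strict:
  fixes a M :: nat and \<tau> :: real
  assumes a1: "1 \<le> a" and aM: "a < M" and tau: "\<tau> > 0"
  shows "(real M - real a) + (real a - 1) * exp (-1/((real a - 1)*\<tau>)) - (real M - 1) * exp (-1/((real M - 1)*\<tau>)) > 0"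
proof (cases "a = 1")
  case True
  have M1: "real M - 1 > 0" using aM True by simp
  have "exp (-1/((real M - 1)*\<tau>)) < 1" using M1 tau by simp
  hence "(real M - 1) * exp (-1/((real M - 1)*\<tau>)) < (real M - 1) * 1"
    using M1 by (intro mult_strict_left_mono) auto
  thus ?thesis using True by simp
next
  case False
  define A where "A = real a - 1"
  define B where "B = real M - 1"
  have A0: "A > 0" using False a1 by (simp add: A_def)
  have AB: "A < B" using aM by (simp add: A_def B_def)
  define l where "l = A / B"
  have l01: "0 < l" "l < 1" using A0 AB by (auto simp: l_def)
  define z where "z = -1/(A*\<tau>)"
  have z0: "z \<noteq> 0" using A0 tau by (simp add: z_def)
  have lz: "l * z = -1/(B*\<tau>)" using A0 AB tau by (simp add: l_def z_def field_simps)
  have "exp (l*z) < (1 - l) + l * exp z" by (rule amgm_strict[OF l01 z0])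
  hence "B * exp (l*z) < B * ((1 - l) + l * exp z)"
    using A0 AB by (intro mult_strict_left_mono) auto
  also have "B * ((1 - l) + l * exp z) = (B - A) + A * exp z"
    using A0 AB by (simp add: l_def field_simps)
  finally show ?thesis unfolding lz by (simp add: A_def B_def z_def)
qed



lemma CE_formula:
  fixes w :: "nat \<Rightarrow> real^'d"
  assumes sc: "sphere_config n w"
  shows "CE_loss \<tau> n w = (1 / real n) * ((\<Sum>k\<in>{1..n}. ln (\<Sum>j\<in>{1..n}. exp (inner (w j) (w k) / \<tau>))) - real n / \<tau>)"
proof -
  have t: "- ln (exp (inner (w k) (w k) / \<tau>) / (\<Sum>j\<in>{1..n}. exp (inner (w j) (w k) / \<tau>)))
        = ln (\<Sum>j\<in>{1..n}. exp (inner (w j) (w k) / \<tau>)) - 1 / \<tau>" if k: "k \<in> {1..n}" for k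
  proof -
    have kk: "inner (w k) (w k) = 1" using sc k by (simp add: sphere_config_def dot_square_norm)
    have pos: "(\<Sum>j\<in>{1..n}. exp (inner (w j) (w k) / \<tau>)) > 0"
      using k by (intro sum_pos) auto
    show ?thesis using pos kk by (simp add: ln_div)
  qed
  have "CE_loss \<tau> n w = (1 / real n) * (\<Sum>k\<in>{1..n}. ln (\<Sum>j\<in>{1..n}. exp (inner (w j) (w k) / \<tau>)) - 1 / \<tau>)"
  proof -
    have "(\<Sum>k\<in>{1..n}. - ln (exp (inner (w k) (w k) / \<tau>) / (\<Sum>j\<in>{1..n}. exp (inner (w j) (w k) / \<tau>))))
        = (\<Sum>k\<in>{1..n}. ln (\<Sum>j\<in>{1..n}. exp (inner (w j) (w k) / \<tau>)) - 1 / \<tau>)"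
      by (rule sum.cong[OF refl]) (rule t)
    thus ?thesis unfolding CE_loss_def by simp
  qed
  also have "\<dots> = (1 / real n) * ((\<Sum>k\<in>{1..n}. ln (\<Sum>j\<in>{1..n}. exp (inner (w j) (w k) / \<tau>))) - real n / \<tau>)"
    by (simp add: sum_subtractf)
  finally show ?thesis .
qed

lemma split_sum_group:
  fixes f :: "nat \<Rightarrow> real"
  assumes fin: "finite A" and B: "B \<subseteq> A" and k: "k \<in> B" and one: "\<forall>j\<in>A-B. f j = 1"
  shows "sum f A = (real (card A) - real (card B)) + f k + sum f (B - {k})"
proof -
  have finB: "finite B" using fin B finite_subset by blast
  have "sum f A = sum f (A - B) + sum f B" using fin B by (simp add: sum.subset_diff)
  also have "sum f (A - B) = real (card (A - B))" using one by simp
  also have "real (card (A - B)) = real (card A) - real (card B)"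
    using fin B finB by (simp add: card_Diff_subset of_nat_diff card_mono)
  also have "sum f B = f k + sum f (B - {k})" using finB k by (simp add: sum.remove)
  finally show ?thesis by simp
qed

lemma group_vs:
  fixes x :: "nat \<Rightarrow> real^'d" and B :: "nat set"
  assumes B: "B \<subseteq> {1..n}" and a1: "1 \<le> card B" and aM: "card B < M" and Mn: "M \<le> n"
    and tau: "\<tau> > 0" and nrm: "\<forall>k\<in>B. norm (x k) = 1"
    and orth: "\<forall>k\<in>B. \<forall>j\<in>{1..n}-B. inner (x j) (x k) = 0"
  shows "(\<Sum>k\<in>B. ln (\<Sum>j\<in>{1..n}. exp (inner (x j) (x k) / \<tau>)))
     > real (card B) * ln ((real n - real M) + exp (1/\<tau>) + (real M - 1) * exp (-1/((real M - 1)*\<tau>)))"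
proof -
  define a where "a = card B"
  have finB: "finite B" using B finite_subset by blast
  define R where "R = (real n - real a) + exp (1/\<tau>)"
  have Rpos: "R > 0" using aM Mn by (simp add: R_def a_def add_nonneg_pos)
  have eqk: "(\<Sum>j\<in>{1..n}. exp (inner (x j) (x k) / \<tau>)) = R + (\<Sum>i\<in>B-{k}. exp (inner (x i) (x k) / \<tau>))"
    if k: "k \<in> B" for k
  proof -
    have "(\<Sum>j\<in>{1..n}. exp (inner (x j) (x k) / \<tau>)) =
       (real (card {1..n}) - real (card B)) + exp (inner (x k) (x k) / \<tau>) + (\<Sum>i\<in>B-{k}. exp (inner (x i) (x k) / \<tau>))"
      by (rule split_sum_group[OF _ B k]) (use orth k in auto)
    moreover have "inner (x k) (x k) = 1" using nrm k by (simp add: dot_square_norm)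
    ultimately show ?thesis by (simp add: R_def a_def)
  qed
  have gb: "(\<Sum>k\<in>B. ln (R + (\<Sum>i\<in>B-{k}. exp (inner (x i) (x k) / \<tau>))))
         \<ge> real a * ln (R + (real a - 1) * exp (-1/((real a - 1)*\<tau>)))"
    unfolding a_def by (rule group_bound[OF finB a1 Rpos tau nrm])
  define Cv where "Cv = (real n - real M) + exp (1/\<tau>) + (real M - 1) * exp (-1/((real M - 1)*\<tau>))"
  have Cvpos: "Cv > 0"
  proof -
    have "real M - 1 \<ge> 0" using aM by simp
    hence "(real M - 1) * exp (-1/((real M - 1)*\<tau>)) \<ge> 0" by simp
    moreover have "real n - real M \<ge> 0" using Mn by simp
    moreover have "exp (1/\<tau>) > 0" by simp
    ultimately show ?thesis unfolding Cv_def by linarith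
  qed
  have "R + (real a - 1) * exp (-1/((real a - 1)*\<tau>)) - Cv =
     (real M - real a) + (real a - 1) * exp (-1/((real a - 1)*\<tau>)) - (real M - 1) * exp (-1/((real M - 1)*\<tau>))"
    by (simp add: R_def Cv_def)
  also have "\<dots> > 0" using merge_strict[OF a1 aM tau] by (simp add: a_def)
  finally have "Cv < R + (real a - 1) * exp (-1/((real a - 1)*\<tau>))" by simp
  hence "ln Cv < ln (R + (real a - 1) * exp (-1/((real a - 1)*\<tau>)))" using Cvpos by simp
  hence "real a * ln Cv < real a * ln (R + (real a - 1) * exp (-1/((real a - 1)*\<tau>)))"
    using a1 by (simp add: a_def)
  also note gb
  also have "(\<Sum>k\<in>B. ln (R + (\<Sum>i\<in>B-{k}. exp (inner (x i) (x k) / \<tau>)))) =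
      (\<Sum>k\<in>B. ln (\<Sum>j\<in>{1..n}. exp (inner (x j) (x k) / \<tau>)))"
    using eqk by simp
  finally show ?thesis by (simp add: Cv_def a_def)
qed

lemma pm_config:
  assumes n: "n \<le> 2 * CARD('d)" "2 \<le> n"
  shows "\<exists>u :: nat \<Rightarrow> real^'d. sphere_config n u \<and> delta_cfg n u \<ge> 1"
proof -
  define d where "d = CARD('d)"
  obtain h where h: "bij_betw h (UNIV :: 'd set) {0..<d}"
    using ex_bij_betw_finite_nat[of "UNIV :: 'd set"] by (auto simp: d_def)
  define g where "g = inv_into UNIV h"
  have gb: "bij_betw g {0..<d} UNIV" unfolding g_def by (rule bij_betw_inv_into[OF h])
  hence ginj: "inj_on g {0..<d}" by (simp add: bij_betw_def)
  define u :: "nat \<Rightarrow> real^'d" where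
    "u = (\<lambda>k. if k \<le> d then axis (g (k - 1)) 1 else - axis (g (k - d - 1)) 1)"
  have sc: "sphere_config n u" by (simp add: sphere_config_def u_def norm_axis_1)
  have ip: "\<forall>i\<in>{1..n}. \<forall>k\<in>{1..n}. i \<noteq> k \<longrightarrow> inner (u i) (u k) \<le> 0"
  proof (intro ballI impI)
    fix i k assume i: "i \<in> {1..n}" and k: "k \<in> {1..n}" and ik: "i \<noteq> k"
    show "inner (u i) (u k) \<le> 0"
    proof (cases "i \<le> d"; cases "k \<le> d")
      assume "i \<le> d" "k \<le> d"
      have "i - 1 < d" "k - 1 < d" "i - 1 \<noteq> k - 1" using i k ik \<open>i \<le> d\<close> \<open>k \<le> d\<close> by auto
      hence "g (i - 1) \<noteq> g (k - 1)" using ginj by (auto dest: inj_onD)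
      thus ?thesis using \<open>i \<le> d\<close> \<open>k \<le> d\<close> by (simp add: u_def inner_axis_axis)
    next
      assume "i \<le> d" "\<not> k \<le> d"
      thus ?thesis by (simp add: u_def inner_axis_axis)
    next
      assume "\<not> i \<le> d" "k \<le> d"
      thus ?thesis by (simp add: u_def inner_axis_axis)
    next
      assume a: "\<not> i \<le> d" "\<not> k \<le> d"
      have "i - d - 1 < d" "k - d - 1 < d" using i k n a by (auto simp: d_def)
      moreover have "i - d - 1 \<noteq> k - d - 1" using a ik by auto
      ultimately have "g (i - d - 1) \<noteq> g (k - d - 1)" using ginj by (auto dest: inj_onD)
      thus ?thesis using a by (simp add: u_def inner_axis_axis)
    qed
  qed
  show ?thesis using sc delta_ge1[OF sc n(2) ip] by blast
qed



theorem lemma14: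
  fixes n l :: nat and \<tau> :: real
    and w :: "nat \<Rightarrow> real^'d" and S :: "nat \<Rightarrow> nat set"
  assumes dn: "CARD('d) + 2 \<le> n" "n \<le> 2 * CARD('d)"
    and tau: "\<tau> > 0"
    and smc: "SMC n w"
    and minim: "\<forall>v :: nat \<Rightarrow> real^'d. SMC n v \<longrightarrow> CE_loss \<tau> n w \<le> CE_loss \<tau> n v"
    and cover: "(\<Union>j\<in>{0..l}. S j) = {1..n}"
    and disj: "\<forall>j\<in>{0..l}. \<forall>j'\<in>{0..l}. j \<noteq> j' \<longrightarrow> S j \<inter> S j' = {}"
    and l_ge: "l \<ge> n - CARD('d)"
    and a: "card (S 0) = dim (span (w ` S 0))"
    and b: "\<forall>j\<in>{1..l}. card (S j) = dim (span (w ` S j)) + 1"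
    and c: "\<forall>j\<in>{0..l}. \<forall>j'\<in>{0..l}. j \<noteq> j' \<longrightarrow>
              (\<forall>x\<in>span (w ` S j). \<forall>y\<in>span (w ` S j'). orthogonal x y)"
  shows "S 0 = {} \<and> span (w ` {1..n}) = UNIV \<and> l = n - CARD('d)"
proof -
  define d where "d = CARD('d)"
  have n2: "2 \<le> n" using dn by simp
  have l2: "2 \<le> l" using dn l_ge by simp
  have Ssub: "S j \<subseteq> {1..n}" if "j \<in> {0..l}" for j using cover that by blast
  have finS: "finite (S j)" if "j \<in> {0..l}" for j using Ssub[OF that] finite_subset by blast
  have scw: "sphere_config n w" using smc by (simp add: SMC_def)
  obtain u0 :: "nat \<Rightarrow> real^'d" where u0: "sphere_config n u0" "delta_cfg n u0 \<ge> 1"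
    using pm_config[OF dn(2) n2] by blast
  have dw: "delta_cfg n w \<ge> 1" using smc u0 unfolding SMC_def by force
  have dle: "delta_cfg n u \<le> 1" if "sphere_config n u" for u :: "nat \<Rightarrow> real^'d"
    by (rule delta_le1[OF that dn(1)])
  have a': "card (S 0) = dim (w ` S 0)" using a by simp
  have b': "card (S j) = dim (w ` S j) + 1" if "j \<in> {1..l}" for j using b that by simp
  have z: "0 \<in> convex hull (w ` S j)" if j: "j \<in> {1..l}" for j
    by (rule zero_in_hull[OF dw scw Ssub]) (use j b' in auto)
  have ipw: "inner (w i) (w k) \<le> 0" if i: "i \<in> {1..n}" and k: "k \<in> {1..n}" and ik: "i \<noteq> k" for i k
  proof -
    obtain j where j: "j \<in> {1..l}" "i \<notin> S j"
    proof (cases "i \<in> S 1")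
      case True
      have "S 1 \<inter> S 2 = {}" using disj l2 by auto
      hence "i \<notin> S 2" using True by auto
      thus ?thesis using that[of 2] l2 by auto
    next
      case False thus ?thesis using that[of 1] l2 by auto
    qed
    have "w ` S j \<subseteq> w ` ({1..n} - {i})" using Ssub[of j] j by auto
    hence "0 \<in> convex hull (w ` ({1..n} - {i}))" using z[OF j(1)] hull_mono by blast
    thus ?thesis by (rule inner_nonpos_of_zero_hull[OF dw scw i k ik[symmetric]])
  qed
  have orthw: "inner (w i) (w k) = 0"
    if "j \<in> {0..l}" "j' \<in> {0..l}" "j \<noteq> j'" "i \<in> S j" "k \<in> S j'" for j j' i k
  proof -
    have "w i \<in> span (w ` S j)" "w k \<in> span (w ` S j')" using that by (auto intro: span_base)
    hence "orthogonal (w i) (w k)" using c that by blast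
    thus ?thesis by (simp add: orthogonal_def)
  qed
  have grp: "\<exists>j\<in>{0..l}. k \<in> S j" if "k \<in> {1..n}" for k using cover that by blast
  have dimfam: "dim (w ` (\<Union>j\<in>J. S j)) = (\<Sum>j\<in>J. dim (w ` S j))" if J: "J \<subseteq> {0..l}" for J
    by (rule dim_family) (use J c finite_subset in \<open>blast+\<close>)
  define D where "D = dim (w ` {1..n})"
  have DS: "D = (\<Sum>j\<in>{0..l}. dim (w ` S j))" using dimfam[of "{0..l}"] cover by (simp add: D_def)
  have Dd: "D \<le> d" unfolding D_def d_def using dim_subset_UNIV[of "w ` {1..n}"] by simp
  have ncard: "n = (\<Sum>j\<in>{0..l}. card (S j))"
  proof -
    have "card (\<Union>j\<in>{0..l}. S j) = (\<Sum>j\<in>{0..l}. card (S j))"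
      by (rule card_UN_disjoint) (use finS disj in auto)
    thus ?thesis using cover by simp
  qed
  have split0: "(\<Sum>j\<in>{0..l}. f j) = f 0 + (\<Sum>j\<in>{1..l}. f j)" for f :: "nat \<Rightarrow> nat"
    using sum.atLeast_Suc_atMost[of 0 l f] by simp
  have nDl: "n = D + l"
  proof -
    have "(\<Sum>j\<in>{1..l}. card (S j)) = (\<Sum>j\<in>{1..l}. dim (w ` S j) + 1)"
      by (rule sum.cong[OF refl]) (rule b')
    also have "\<dots> = (\<Sum>j\<in>{1..l}. dim (w ` S j)) + (\<Sum>j\<in>{1..l}. 1)" by (rule sum.distrib)
    also have "(\<Sum>j\<in>{1..l}. (1::nat)) = l" by simp
    finally have "(\<Sum>j\<in>{1..l}. card (S j)) = (\<Sum>j\<in>{1..l}. dim (w ` S j)) + l" .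
    thus ?thesis using ncard DS split0[of "\<lambda>j. card (S j)"] split0[of "\<lambda>j. dim (w ` S j)"] a' by simp
  qed
  have main: "S 0 = {} \<and> D = d"
  proof (rule ccontr)
    assume H: "\<not> (S 0 = {} \<and> D = d)"
    have sum_pq: "(\<Sum>j\<in>{0..l}. f j) = f p + f q + (\<Sum>j\<in>{0..l}-{p,q}. f j)"
      if "p \<in> {0..l}" "q \<in> {0..l}" "p \<noteq> q" for p q and f :: "nat \<Rightarrow> nat"
    proof -
      have "(\<Sum>j\<in>{0..l}. f j) = f p + (\<Sum>j\<in>{0..l}-{p}. f j)" using that by (simp add: sum.remove)
      also have "(\<Sum>j\<in>{0..l}-{p}. f j) = f q + (\<Sum>j\<in>{0..l}-{p}-{q}. f j)"
        using that by (intro sum.remove) auto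
      also have "{0..l}-{p}-{q} = {0..l}-{p,q}" by auto
      finally show ?thesis by simp
    qed
    obtain p q where pq: "p \<in> {0..l}" "q \<in> {0..l}" "p \<noteq> q"
      and cp: "1 \<le> card (S p)" "1 \<le> card (S q)"
      and dimc: "(\<Sum>j\<in>{0..l}-{p,q}. dim (w ` S j)) + card (S p) + card (S q) \<le> d + 1"
    proof (cases "S 0 = {}")
      case False
      have p: "0 \<in> {0..l}" "1 \<in> {0..l}" "(0::nat) \<noteq> 1" using l2 by auto
      have c0: "1 \<le> card (S 0)" using False finS[of 0] by (simp add: Suc_le_eq card_gt_0_iff)
      have c1: "card (S 1) = dim (w ` S 1) + 1" using b' l2 by auto
      have "D = dim (w ` S 0) + dim (w ` S 1) + (\<Sum>j\<in>{0..l}-{0,1}. dim (w ` S j))"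
        using DS sum_pq[OF p] by simp
      thus ?thesis using that[OF p c0] c1 a' Dd by simp
    next
      case True
      hence Dlt: "D < d" using H Dd by simp
      have p: "1 \<in> {0..l}" "2 \<in> {0..l}" "(1::nat) \<noteq> 2" using l2 by auto
      have c1: "card (S 1) = dim (w ` S 1) + 1" "card (S 2) = dim (w ` S 2) + 1" using b' l2 by auto
      have "D = dim (w ` S 1) + dim (w ` S 2) + (\<Sum>j\<in>{0..l}-{1,2}. dim (w ` S j))"
        using DS sum_pq[OF p] by simp
      thus ?thesis using that[OF p] c1 Dlt by simp
    qed
    define G where "G = S p \<union> S q"
    define M where "M = card G"
    have disjpq: "S p \<inter> S q = {}" using disj pq by auto
    have GM: "M = card (S p) + card (S q)"
      unfolding M_def G_def using finS pq disjpq by (simp add: card_Un_disjoint)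
    have Gsub: "G \<subseteq> {1..n}" using Ssub pq by (auto simp: G_def)
    have finG: "finite G" using finS pq by (simp add: G_def)
    have Mn: "M \<le> n" unfolding M_def using card_mono[OF _ Gsub] by simp
    define J' where "J' = {0..l} - {p,q}"
    define T where "T = w ` (\<Union>j\<in>J'. S j)"
    have dimT: "dim T = (\<Sum>j\<in>J'. dim (w ` S j))" unfolding T_def by (rule dimfam) (auto simp: J'_def)
    define U where "U = {y. \<forall>x\<in>span T. orthogonal x y}"
    have sU: "subspace U" unfolding U_def by (rule subspace_orthogonal_to_vectors)
    have "dim {y \<in> UNIV. \<forall>x\<in>span T. orthogonal x y} + dim (span T) = dim (UNIV :: (real^'d) set)"
      by (rule dim_subspace_orthogonal_to_vectors[OF subspace_span subspace_UNIV subset_UNIV])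
    hence dU: "dim U + dim T = d" by (simp add: U_def d_def)
    have M1: "1 \<le> M - 1" "M - 1 \<le> dim U" using dU dimc dimT cp GM by (auto simp: J'_def)
    obtain ps where ps: "\<forall>i\<le>M-1. ps i \<in> U \<and> norm (ps i) = 1"
        "\<forall>i\<le>M-1. \<forall>j\<le>M-1. i \<noteq> j \<longrightarrow> inner (ps i) (ps j) = -1 / real (M-1)"
      using reg_simplex_aux[OF sU M1(1) M1(2)] by blast
    obtain \<sigma> where \<sigma>: "bij_betw \<sigma> G {0..<M}" using ex_bij_betw_finite_nat[OF finG] by (auto simp: M_def)
    have \<sigma>lt: "\<sigma> k \<le> M - 1" if "k \<in> G" for k
    proof -
      have "\<sigma> k \<in> {0..<M}" using \<sigma> that by (auto simp: bij_betw_def)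
      thus ?thesis by auto
    qed
    have \<sigma>inj: "\<sigma> i \<noteq> \<sigma> k" if "i \<in> G" "k \<in> G" "i \<noteq> k" for i k
      using \<sigma> that by (auto simp: bij_betw_def dest: inj_onD)
    define v where "v = (\<lambda>k. if k \<in> G then ps (\<sigma> k) else w k)"
    have outside: "\<exists>j\<in>J'. k \<in> S j" if "k \<in> {1..n}" "k \<notin> G" for k
      using grp[OF that(1)] that(2) by (auto simp: J'_def G_def)
    have wT: "w k \<in> span T" if "k \<in> {1..n}" "k \<notin> G" for k
      using outside[OF that] by (auto simp: T_def intro!: span_base)
    have vU: "v k \<in> U" "norm (v k) = 1" if "k \<in> G" for k
      using ps(1) \<sigma>lt[OF that] that by (auto simp: v_def)
    have orth_v: "inner (v j) (v k) = 0" "inner (v k) (v j) = 0"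
      if kG: "k \<in> G" and jn: "j \<in> {1..n}" "j \<notin> G" for j k
    proof -
      have "orthogonal (w j) (v k)" using vU(1)[OF kG] wT[OF jn] by (auto simp: U_def)
      thus "inner (v j) (v k) = 0" "inner (v k) (v j) = 0"
        using jn by (auto simp: v_def orthogonal_def inner_commute)
    qed
    have orth_wG: "inner (w j) (w k) = 0" if jG: "j \<in> G" and kn: "k \<in> {1..n}" "k \<notin> G" for j k
    proof -
      obtain j' where j': "j' \<in> J'" "k \<in> S j'" using outside[OF kn] by blast
      have "j \<in> S p \<or> j \<in> S q" using jG by (auto simp: G_def)
      thus ?thesis
      proof
        assume "j \<in> S p" thus ?thesis using orthw[of p j' j k] pq j' by (auto simp: J'_def)
      next
        assume "j \<in> S q" thus ?thesis using orthw[of q j' j k] pq j' by (auto simp: J'_def)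
      qed
    qed
    have scv: "sphere_config n v"
      using scw vU(2) by (auto simp: sphere_config_def v_def)
    have ipv: "\<forall>i\<in>{1..n}. \<forall>k\<in>{1..n}. i \<noteq> k \<longrightarrow> inner (v i) (v k) \<le> 0"
    proof (intro ballI impI)
      fix i k assume i: "i \<in> {1..n}" and k: "k \<in> {1..n}" and ik: "i \<noteq> k"
      show "inner (v i) (v k) \<le> 0"
      proof (cases "i \<in> G"; cases "k \<in> G")
        assume "i \<in> G" "k \<in> G"
        thus ?thesis using ps(2) \<sigma>lt \<sigma>inj ik M1 by (simp add: v_def)
      next
        assume "i \<in> G" "k \<notin> G" thus ?thesis using orth_v[of i k] k by simp
      next
        assume "i \<notin> G" "k \<in> G" thus ?thesis using orth_v[of k i] i by simp
      next
        assume "i \<notin> G" "k \<notin> G" thus ?thesis using ipw[OF i k ik] by (simp add: v_def)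
      qed
    qed
    have dv: "delta_cfg n v \<ge> 1" by (rule delta_ge1[OF scv n2 ipv])
    have smcv: "SMC n v" unfolding SMC_def using scv dv dle by force
    have CEle: "CE_loss \<tau> n w \<le> CE_loss \<tau> n v" using minim smcv by blast
    define Sw where "Sw = (\<lambda>k. ln (\<Sum>j\<in>{1..n}. exp (inner (w j) (w k) / \<tau>)))"
    define Sv where "Sv = (\<lambda>k. ln (\<Sum>j\<in>{1..n}. exp (inner (v j) (v k) / \<tau>)))"
    define Cv where "Cv = (real n - real M) + exp (1/\<tau>) + (real M - 1) * exp (-1/((real M - 1)*\<tau>))"
    have same: "Sv k = Sw k" if "k \<in> {1..n} - G" for k
    proof -
      have "inner (v j) (v k) = inner (w j) (w k)" if j: "j \<in> {1..n}" for j
      proof (cases "j \<in> G")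
        case True
        thus ?thesis using orth_v[of j k] orth_wG[of j k] \<open>k \<in> {1..n} - G\<close> by simp
      next
        case False thus ?thesis using \<open>k \<in> {1..n} - G\<close> by (simp add: v_def)
      qed
      thus ?thesis unfolding Sv_def Sw_def by simp
    qed
    have SvG: "Sv k = ln Cv" if k: "k \<in> G" for k
    proof -
      have "(\<Sum>j\<in>{1..n}. exp (inner (v j) (v k) / \<tau>)) =
         (real (card {1..n}) - real (card G)) + exp (inner (v k) (v k) / \<tau>) + (\<Sum>i\<in>G-{k}. exp (inner (v i) (v k) / \<tau>))"
        by (rule split_sum_group[OF _ Gsub k]) (use orth_v k in auto)
      moreover have "inner (v k) (v k) = 1" using vU(2)[OF k] by (simp add: dot_square_norm)
      moreover have "(\<Sum>i\<in>G-{k}. exp (inner (v i) (v k) / \<tau>)) = (\<Sum>i\<in>G-{k}. exp (-1/((real M - 1)*\<tau>)))"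
      proof (rule sum.cong[OF refl])
        fix i assume i: "i \<in> G - {k}"
        have "inner (v i) (v k) = -1 / real (M - 1)"
          using ps(2) \<sigma>lt[of i] \<sigma>lt[OF k] \<sigma>inj[of i k] i k by (simp add: v_def)
        moreover have "real (M - 1) = real M - 1" using M1 by (simp add: of_nat_diff)
        ultimately show "exp (inner (v i) (v k) / \<tau>) = exp (-1/((real M - 1)*\<tau>))" by simp
      qed
      moreover have "real (card (G - {k})) = real M - 1"
        using k finG M1 by (simp add: M_def card_Diff_singleton of_nat_diff)
      ultimately show ?thesis by (simp add: Sv_def Cv_def M_def)
    qed
    have gp: "(\<Sum>k\<in>S p. Sw k) > real (card (S p)) * ln Cv"
      unfolding Sw_def Cv_def
    proof (rule group_vs)
      show "S p \<subseteq> {1..n}" using Ssub pq by simp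
      show "1 \<le> card (S p)" by (rule cp)
      show "card (S p) < M" using GM cp by simp
      show "M \<le> n" by (rule Mn)
      show "\<tau> > 0" by (rule tau)
      show "\<forall>k\<in>S p. norm (w k) = 1" using scw Ssub pq by (auto simp: sphere_config_def)
      show "\<forall>k\<in>S p. \<forall>j\<in>{1..n} - S p. inner (w j) (w k) = 0"
      proof (intro ballI)
        fix k j assume k: "k \<in> S p" and j: "j \<in> {1..n} - S p"
        obtain j' where "j' \<in> {0..l}" "j \<in> S j'" using grp j by blast
        thus "inner (w j) (w k) = 0" using orthw[of j' p j k] pq j k by auto
      qed
    qed
    have gq: "(\<Sum>k\<in>S q. Sw k) > real (card (S q)) * ln Cv"
      unfolding Sw_def Cv_def
    proof (rule group_vs)
      show "S q \<subseteq> {1..n}" using Ssub pq by simp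
      show "1 \<le> card (S q)" by (rule cp)
      show "card (S q) < M" using GM cp by simp
      show "M \<le> n" by (rule Mn)
      show "\<tau> > 0" by (rule tau)
      show "\<forall>k\<in>S q. norm (w k) = 1" using scw Ssub pq by (auto simp: sphere_config_def)
      show "\<forall>k\<in>S q. \<forall>j\<in>{1..n} - S q. inner (w j) (w k) = 0"
      proof (intro ballI)
        fix k j assume k: "k \<in> S q" and j: "j \<in> {1..n} - S q"
        obtain j' where "j' \<in> {0..l}" "j \<in> S j'" using grp j by blast
        thus "inner (w j) (w k) = 0" using orthw[of j' q j k] pq j k by auto
      qed
    qed
    have "(\<Sum>k\<in>G. Sv k) = real M * ln Cv" using SvG by (simp add: M_def)
    also have "\<dots> = real (card (S p)) * ln Cv + real (card (S q)) * ln Cv" using GM by (simp add: algebra_simps)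
    also have "\<dots> < (\<Sum>k\<in>S p. Sw k) + (\<Sum>k\<in>S q. Sw k)" using gp gq by simp
    also have "\<dots> = (\<Sum>k\<in>G. Sw k)" unfolding G_def
      using finS pq disjpq by (simp add: sum.union_disjoint)
    finally have ltG: "(\<Sum>k\<in>G. Sv k) < (\<Sum>k\<in>G. Sw k)" .
    have "(\<Sum>k\<in>{1..n}. Sv k) = (\<Sum>k\<in>{1..n}-G. Sv k) + (\<Sum>k\<in>G. Sv k)"
      using Gsub by (simp add: sum.subset_diff)
    also have "(\<Sum>k\<in>{1..n}-G. Sv k) = (\<Sum>k\<in>{1..n}-G. Sw k)" using same by simp
    also have "(\<Sum>k\<in>{1..n}-G. Sw k) + (\<Sum>k\<in>G. Sv k) < (\<Sum>k\<in>{1..n}-G. Sw k) + (\<Sum>k\<in>G. Sw k)"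
      using ltG by simp
    also have "\<dots> = (\<Sum>k\<in>{1..n}. Sw k)" using Gsub by (simp add: sum.subset_diff)
    finally have lt: "(\<Sum>k\<in>{1..n}. Sv k) < (\<Sum>k\<in>{1..n}. Sw k)" .
    have "CE_loss \<tau> n v < CE_loss \<tau> n w"
      unfolding CE_formula[OF scv] CE_formula[OF scw]
      using lt n2 by (simp add: Sv_def Sw_def divide_strict_right_mono)
    thus False using CEle by simp
  qed
  have "span (w ` {1..n}) = UNIV"
    using main dim_eq_full[of "w ` {1..n}"] by (simp add: D_def d_def)
  moreover have "l = n - CARD('d)" using main nDl by (simp add: d_def)
  ultimately show ?thesis using main by simp
qed

end
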